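(* Let $\mathbb K$ be a field and let $\beta,\gamma,\gamma^*,\varrho,\varrho^*\in\mathbb K$. Assume $q$ is not a root of unity, where $q$ (in the algebraic closure of $\mathbb K$) satisfies $q+q^{-1}=\beta$. Let $T$ be the Tridiagonal algebra over $\mathbb K$ with parameters $\beta,\gamma,\gamma^*,\varrho,\varrho^*$ and standard generators $A,A^*$. Let $V$ be an irreducible finite dimensional $T$-module and assume each of $A,A^*$ is diagonalizable on $V$. Then $A,A^*$ act on $V$ as a TD pair.
   Context: For $\beta,\gamma,\gamma^*,\varrho,\varrho^*\in\mathbb K$, the Tridiagonal algebra $T=T(\beta,\gamma,\gamma^*,\varrho,\varrho^* )$ is the associative $\mathbb K$-algebra with $1$ generated by two symbols $A,A^*$ (the standard generators) subject to the relations $[A,\,A^2A^*-\beta AA^*A+A^*A^2-\gamma(AA^*+A^*A)-\varrho A^*]=0$ and $[A^*,\,A^{*2}A-\beta A^*AA^*+AA^{*2}-\gamma^*(A^*A+AA^* )-\varrho^*A]=0$, where $[r,s]=rs-sr$. A linear map on $V$ is diagonalizable if $V$ is spanned by its eigenspaces (an eigenspace being a nonzero subspace $\{v: Av=\theta v\}$, $\theta\in\mathbb K$). A TD pair on a finite-dimensional nonzero vector space $V$ is an ordered pair $A,A^*$ of linear maps $V\to V$ such that: (a) $A$ and $A^*$ are diagonalizable on $V$; (b) there is an ordering $V_0,\dots,V_d$ of the eigenspaces of $A$ with $A^*V_i\subseteq V_{i-1}+V_i+V_{i+1}$ ($0\le i\le d$, $V_{-1}=V_{d+1}=0$); (c)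 there is an ordering $V^*_0,\dots,V^*_\delta$ of the eigenspaces of $A^*$ with $AV^*_i\subseteq V^*_{i-1}+V^*_i+V^*_{i+1}$ ($0\le i\le\delta$, $V^*_{-1}=V^*_{\delta+1}=0$); (d) the only subspaces $W$ with $AW\subseteq W$, $A^*W\subseteq W$ are $0$ and $V$. *)

theory Defs
  imports "HOL-Analysis.Analysis"
begin

text \<open>A finite-dimensional nonzero vector space over the field 'k is modelled as 'k^'n
  ('n a finite, hence nonempty, index type); linear maps are n x n matrices acting by *v.\<close>

definition mscale :: "'k::field \<Rightarrow> 'k^'n^'m \<Rightarrow> 'k^'n^'m" where
  "mscale c M = (\<chi> i j. c * (M $ i $ j))"

definition comm :: "'k::field^'n^'n \<Rightarrow> 'k^'n^'n \<Rightarrow> 'k^'n^'n" where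
  "comm R S = R ** S - S ** R"

definition TD_relations ::
  "'k::field \<Rightarrow> 'k \<Rightarrow> 'k \<Rightarrow> 'k \<Rightarrow> 'k \<Rightarrow> 'k^'n^'n \<Rightarrow> 'k^'n^'n \<Rightarrow> bool" where
  "TD_relations \<beta> \<gamma> \<gamma>s \<rho> \<rho>s A As \<longleftrightarrow>
     comm A (A ** A ** As - mscale \<beta> (A ** As ** A) + As ** A ** A
             - mscale \<gamma> (A ** As + As ** A) - mscale \<rho> As) = 0 \<and>
     comm As (As ** As ** A - mscale \<beta> (As ** A ** As) + A ** As ** As
             - mscale \<gamma>s (As ** A + A ** As) - mscale \<rho>s A) = 0"

definition espace :: "'k::field^'n^'n \<Rightarrow> 'k \<Rightarrow> ('k^'n) set" where
  "espace A \<theta> = {v. A *v v = \<theta> *s v}"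

definition eigvals :: "'k::field^'n^'n \<Rightarrow> 'k set" where
  "eigvals A = {\<theta>. espace A \<theta> \<noteq> {0}}"

definition diagonalizable :: "'k::field^'n^'n \<Rightarrow> bool" where
  "diagonalizable A \<longleftrightarrow> vec.span (\<Union>\<theta>\<in>eigvals A. espace A \<theta>) = UNIV"

text \<open>No subspace other than 0 and V is invariant under both maps
  (= irreducible T-module, since T is generated by A, A*).\<close>
definition irreducible_pair :: "'k::field^'n^'n \<Rightarrow> 'k^'n^'n \<Rightarrow> bool" where
  "irreducible_pair A As \<longleftrightarrow>
     (\<forall>W. vec.subspace W \<and> (\<lambda>v. A *v v) ` W \<subseteq> W \<and> (\<lambda>v. As *v v) ` W \<subseteq> W
          \<longrightarrow> W = {0} \<or> W = UNIV)"

definition ssum3 :: "('k::field^'n) set \<Rightarrow> ('k^'n) set \<Rightarrow> ('k^'n) set \<Rightarrow> ('k^'n) set" where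
  "ssum3 U V W = {x + y + z | x y z. x \<in> U \<and> y \<in> V \<and> z \<in> W}"

definition tridiagonal_ordering :: "'k::field^'n^'n \<Rightarrow> 'k^'n^'n \<Rightarrow> nat \<Rightarrow> (nat \<Rightarrow> 'k) \<Rightarrow> bool" where
  "tridiagonal_ordering A B d \<theta> \<longleftrightarrow>
     inj_on \<theta> {0..d} \<and> \<theta> ` {0..d} = eigvals A \<and>
     (\<forall>i\<le>d. (\<lambda>v. B *v v) ` espace A (\<theta> i) \<subseteq>
        ssum3 (if 0 < i then espace A (\<theta> (i - 1)) else {0})
              (espace A (\<theta> i))
              (if i < d then espace A (\<theta> (i + 1)) else {0}))"

definition TD_pair :: "'k::field^'n^'n \<Rightarrow> 'k^'n^'n \<Rightarrow> bool" where
  "TD_pair A As \<longleftrightarrow>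
     diagonalizable A \<and> diagonalizable As \<and>
     (\<exists>d \<theta>. tridiagonal_ordering A As d \<theta>) \<and>
     (\<exists>\<delta> \<theta>s. tridiagonal_ordering As A \<delta> \<theta>s) \<and>
     irreducible_pair A As"

definition field_embedding :: "('k::field \<Rightarrow> 'L::field) \<Rightarrow> bool" where
  "field_embedding \<phi> \<longleftrightarrow> \<phi> 1 = 1 \<and> (\<forall>x y. \<phi> (x + y) = \<phi> x + \<phi> y \<and> \<phi> (x * y) = \<phi> x * \<phi> y)"

definition root_of_unity :: "'L::field \<Rightarrow> bool" where
  "root_of_unity q \<longleftrightarrow> (\<exists>n>0. q ^ n = 1)"

end

theory Submission
  imports Defs
begin

lemma espace_mem: "v \<in> espace A \<theta> \<longleftrightarrow> A *v v = \<theta> *s v"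
  by (simp add: espace_def)

lemma espace_scale: "v \<in> espace A \<theta> \<Longrightarrow> c *s v \<in> espace A \<theta>"
  by (simp add: espace_def vec.scale vec.scale_scale mult.commute)

lemma espace_add: "v \<in> espace A \<theta> \<Longrightarrow> u \<in> espace A \<theta> \<Longrightarrow> v + u \<in> espace A \<theta>"
  by (simp add: espace_def matrix_vector_right_distrib vec.scale_right_distrib)

lemma espace_zero: "0 \<in> espace A \<theta>"
  by (simp add: espace_def)

lemma indep:
  fixes A :: "'k::field^'n^'n"
  assumes "finite S" "\<forall>\<theta>\<in>S. w \<theta> \<in> espace A \<theta>" "(\<Sum>\<theta>\<in>S. w \<theta>) = 0"
  shows "\<forall>\<theta>\<in>S. w \<theta> = 0"
  using assms
proof (induction S arbitrary: w rule: finite_induct)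
  case empty then show ?case by simp
next
  case (insert a F)
  have eq: "w a + (\<Sum>\<theta>\<in>F. w \<theta>) = 0" using insert by simp
  have "A *v (w a + (\<Sum>\<theta>\<in>F. w \<theta>)) = 0" using eq by simp
  hence e1: "a *s w a + (\<Sum>\<theta>\<in>F. \<theta> *s w \<theta>) = 0" using insert.prems
    by (simp add: matrix_vector_right_distrib vec.sum espace_def)
  have "a *s (w a + (\<Sum>\<theta>\<in>F. w \<theta>)) = 0" using eq by simp
  hence e2: "a *s w a + (\<Sum>\<theta>\<in>F. a *s w \<theta>) = 0"
    by (simp add: vec.scale_right_distrib vec.scale_sum_right)
  have "(\<Sum>\<theta>\<in>F. (\<theta> - a) *s w \<theta>) = (\<Sum>\<theta>\<in>F. \<theta> *s w \<theta>) - (\<Sum>\<theta>\<in>F. a *s w \<theta>)"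
    by (simp add: vec.scale_left_diff_distrib sum_subtractf)
  also have "\<dots> = 0" using e1 e2 by (metis add_left_imp_eq diff_self)
  finally have s0: "(\<Sum>\<theta>\<in>F. (\<theta> - a) *s w \<theta>) = 0" .
  have "\<forall>\<theta>\<in>F. (\<theta> - a) *s w \<theta> \<in> espace A \<theta>"
    using insert.prems espace_scale by blast
  with insert.IH[of "\<lambda>\<theta>. (\<theta> - a) *s w \<theta>"] s0
  have "\<forall>\<theta>\<in>F. (\<theta> - a) *s w \<theta> = 0" by blast
  hence wF: "\<forall>\<theta>\<in>F. w \<theta> = 0" using insert.hyps by (auto simp: vec.scale_eq_0_iff)
  hence "w a = 0" using eq by simp
  with wF show ?case by simp
qed

lemma eigvals_finite: "finite (eigvals (A::'k::field^'n^'n))"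
proof -
  have "\<forall>\<theta>\<in>eigvals A. \<exists>v. v \<in> espace A \<theta> \<and> v \<noteq> 0"
    using espace_zero by (fastforce simp: eigvals_def)
  then obtain v where v: "\<forall>\<theta>\<in>eigvals A. v \<theta> \<in> espace A \<theta> \<and> v \<theta> \<noteq> 0" by metis
  have inj: "inj_on v (eigvals A)"
  proof (rule inj_onI)
    fix x y assume x: "x \<in> eigvals A" and y: "y \<in> eigvals A" and e: "v x = v y"
    have "x *s v x = y *s v x" using v x y e by (metis espace_mem)
    hence "(x - y) *s v x = 0" by (simp add: vec.scale_left_diff_distrib)
    thus "x = y" using v x by (simp add: vec.scale_eq_0_iff)
  qed
  have "vec.independent (v ` eigvals A)"
    unfolding vec.independent_explicit_module
  proof (intro allI impI)
    fix t u x assume t: "finite t" "t \<subseteq> v ` eigvals A" "(\<Sum>x\<in>t. u x *s x) = 0" "x \<in> t"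
    obtain F where F: "F \<subseteq> eigvals A" "t = v ` F" using t(2) by (auto simp: subset_image_iff)
    have injF: "inj_on v F" using inj F(1) inj_on_subset by blast
    have fF: "finite F" using t(1) F(2) injF finite_imageD by blast
    have s: "(\<Sum>\<theta>\<in>F. u (v \<theta>) *s v \<theta>) = 0" using t(3) F(2) injF by (simp add: sum.reindex)
    have "\<forall>\<theta>\<in>F. u (v \<theta>) *s v \<theta> = 0"
      by (rule indep[OF fF _ s]) (use F v espace_scale in blast)
    thus "u x = 0" using t(4) F v by (auto simp: vec.scale_eq_0_iff)
  qed
  hence "finite (v ` eigvals A)" by (rule vec.finiteI_independent)
  thus ?thesis using inj finite_imageD by blast
qed

lemma decomp:
  fixes A :: "'k::field^'n^'n"
  assumes "finite C" "x \<in> vec.span (\<Union>\<theta>\<in>C. espace A \<theta>)"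
  shows "\<exists>w. (\<forall>\<theta>\<in>C. w \<theta> \<in> espace A \<theta>) \<and> x = (\<Sum>\<theta>\<in>C. w \<theta>)"
  using assms(2)
proof (induction rule: vec.span_induct_alt)
  case base
  show ?case by (rule exI[of _ "\<lambda>_. 0"]) (simp add: espace_zero)
next
  case (step c x y)
  then obtain w where w: "\<forall>\<theta>\<in>C. w \<theta> \<in> espace A \<theta>" "y = (\<Sum>\<theta>\<in>C. w \<theta>)" by blast
  from step obtain \<theta>0 where t0: "\<theta>0 \<in> C" "x \<in> espace A \<theta>0" by blast
  let ?w = "\<lambda>\<theta>. (if \<theta> = \<theta>0 then c *s x else 0) + w \<theta>"
  have "\<forall>\<theta>\<in>C. ?w \<theta> \<in> espace A \<theta>"
    using w t0 by (auto intro!: espace_add espace_scale simp: espace_zero)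
  moreover have "c *s x + y = (\<Sum>\<theta>\<in>C. ?w \<theta>)"
    using w t0 assms(1) by (simp add: sum.distrib)
  ultimately show ?case by (intro exI[of _ ?w]) simp
qed

definition Pf :: "'k::field \<Rightarrow> 'k \<Rightarrow> 'k \<Rightarrow> 'k \<Rightarrow> 'k \<Rightarrow> 'k" where
  "Pf \<beta> \<gamma> \<rho> x y = x * x - \<beta> * x * y + y * y - \<gamma> * (x + y) - \<rho>"

lemma mscale_mv: "mscale c M *v v = c *s (M *v v)"
  by (simp add: vec_eq_iff matrix_vector_mult_def mscale_def sum_distrib_left mult.assoc)

lemma key:
  fixes A B :: "'k::field^'n^'n"
  assumes rel: "comm A (A ** A ** B - mscale \<beta> (A ** B ** A) + B ** A ** A
             - mscale \<gamma> (A ** B + B ** A) - mscale \<rho> B) = 0"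
    and S: "finite S" and v: "v \<in> espace A \<theta>"
    and w: "\<forall>x\<in>S. w x \<in> espace A x" and Bv: "B *v v = (\<Sum>x\<in>S. w x)"
    and t: "\<theta>' \<in> S" "\<theta>' \<noteq> \<theta>" "Pf \<beta> \<gamma> \<rho> \<theta> \<theta>' \<noteq> 0"
  shows "w \<theta>' = 0"
proof -
  define R where "R = A ** A ** B - mscale \<beta> (A ** B ** A) + B ** A ** A
             - mscale \<gamma> (A ** B + B ** A) - mscale \<rho> B"
  have AR: "A ** R = R ** A" using rel unfolding comm_def R_def by simp
  define L where "L f = (\<Sum>x\<in>S. f x *s w x)" for f
  have Ladd: "L f + L g = L (\<lambda>x. f x + g x)" for f g
    by (simp add: L_def sum.distrib vec.scale_left_distrib)
  have Ldiff: "L f - L g = L (\<lambda>x. f x - g x)" for f g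
    by (simp add: L_def sum_subtractf vec.scale_left_diff_distrib)
  have Lsc: "c *s L f = L (\<lambda>x. c * f x)" for c f
    by (simp add: L_def vec.scale_sum_right vec.scale_scale)
  have LA: "A *v L f = L (\<lambda>x. x * f x)" for f
  proof -
    have "A *v L f = (\<Sum>x\<in>S. f x *s (A *v w x))" by (simp add: L_def vec.sum vec.scale)
    also have "\<dots> = L (\<lambda>x. x * f x)" unfolding L_def
      by (rule sum.cong) (use w in \<open>auto simp: espace_def vec.scale_scale mult.commute\<close>)
    finally show ?thesis .
  qed
  have Lcong: "L f = L g" if "\<And>x. x \<in> S \<Longrightarrow> f x = g x" for f g
    unfolding L_def using that by (auto intro: sum.cong)
  have z: "B *v v = L (\<lambda>_. 1)" using Bv by (simp add: L_def)
  have Av: "A *v v = \<theta> *s v" using v by (simp add: espace_def)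
  have Rv: "R *v v = L (\<lambda>x. Pf \<beta> \<gamma> \<rho> \<theta> x)"
  proof -
    have "R *v v = A *v (A *v (B *v v)) - \<beta> *s (A *v (B *v (A *v v))) + B *v (A *v (A *v v))
       - \<gamma> *s (A *v (B *v v) + B *v (A *v v)) - \<rho> *s (B *v v)"
      unfolding R_def
      by (simp add: matrix_vector_mult_diff_rdistrib matrix_vector_mult_add_rdistrib mscale_mv
          matrix_vector_mul_assoc[symmetric])
    also have "\<dots> = A *v (A *v (B *v v)) - \<beta> *s (\<theta> *s (A *v (B *v v))) + (\<theta> * \<theta>) *s (B *v v)
       - \<gamma> *s (A *v (B *v v) + \<theta> *s (B *v v)) - \<rho> *s (B *v v)"
      by (simp add: Av vec.scale vec.scale_scale)
    also have "\<dots> = L (\<lambda>x. Pf \<beta> \<gamma> \<rho> \<theta> x)"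
      unfolding z LA Lsc Ladd Ldiff
      by (rule Lcong) (simp add: Pf_def algebra_simps)
    finally show ?thesis .
  qed
  have "A *v (R *v v) = R *v (A *v v)"
    by (simp add: matrix_vector_mul_assoc AR)
  hence "L (\<lambda>x. x * Pf \<beta> \<gamma> \<rho> \<theta> x) = L (\<lambda>x. \<theta> * Pf \<beta> \<gamma> \<rho> \<theta> x)"
    by (simp add: Rv LA Av vec.scale Lsc)
  hence "L (\<lambda>x. (x - \<theta>) * Pf \<beta> \<gamma> \<rho> \<theta> x) = 0"
    using Ldiff[of "\<lambda>x. x * Pf \<beta> \<gamma> \<rho> \<theta> x" "\<lambda>x. \<theta> * Pf \<beta> \<gamma> \<rho> \<theta> x"]
    by (simp add: algebra_simps)
  hence "\<forall>x\<in>S. ((x - \<theta>) * Pf \<beta> \<gamma> \<rho> \<theta> x) *s w x = 0"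
    unfolding L_def by (rule indep[OF S, rotated]) (use w espace_scale in blast)
  thus ?thesis using t by (auto simp: vec.scale_eq_0_iff)
qed

lemma path_exists:
  fixes S :: "'a set" and adj :: "'a \<Rightarrow> 'a \<Rightarrow> bool"
  assumes fin: "finite S" and ne: "S \<noteq> {}"
    and sym: "\<And>x y. adj x y \<Longrightarrow> adj y x"
    and irr: "\<And>x. \<not> adj x x"
    and deg: "\<And>x a b c. x\<in>S \<Longrightarrow> a\<in>S \<Longrightarrow> b\<in>S \<Longrightarrow> c\<in>S \<Longrightarrow> adj x a \<Longrightarrow> adj x b \<Longrightarrow> adj x c
                 \<Longrightarrow> a = b \<or> a = c \<or> b = c"
    and conn: "\<And>C. C \<subseteq> S \<Longrightarrow> C \<noteq> {} \<Longrightarrow> (\<forall>x\<in>C. \<forall>y\<in>S. adj x y \<longrightarrow> y \<in> C) \<Longrightarrow> C = S"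
    and nocyc: "\<And>d \<theta>. 2 \<le> d \<Longrightarrow> inj_on \<theta> {0..d} \<Longrightarrow> \<theta> ` {0..d} \<subseteq> S
                 \<Longrightarrow> (\<forall>j<d. adj (\<theta> j) (\<theta> (Suc j))) \<Longrightarrow> adj (\<theta> 0) (\<theta> d) \<Longrightarrow> False"
  shows "\<exists>d \<theta>. inj_on \<theta> {0..d} \<and> \<theta> ` {0..d} = S \<and>
            (\<forall>i\<le>d. \<forall>j\<le>d. adj (\<theta> i) (\<theta> j) \<longrightarrow> j = Suc i \<or> i = Suc j)"
proof -
  define isP where "isP xs \<longleftrightarrow> xs \<noteq> [] \<and> distinct xs \<and> set xs \<subseteq> S \<and>
      (\<forall>j. Suc j < length xs \<longrightarrow> adj (xs!j) (xs!Suc j))" for xs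
  obtain s where s: "s \<in> S" using ne by blast
  have P1: "isP [s]" using s by (simp add: isP_def)
  have bnd: "length xs \<le> card S" if "isP xs" for xs
  proof -
    have "length xs = card (set xs)" using that distinct_card unfolding isP_def by metis
    also have "\<dots> \<le> card S" using that fin card_mono unfolding isP_def by metis
    finally show ?thesis .
  qed
  obtain n where n: "\<exists>xs. isP xs \<and> length xs = n" "\<forall>m. (\<exists>xs. isP xs \<and> length xs = m) \<longrightarrow> m \<le> n"
  proof -
    have "\<exists>xs. isP xs \<and> length xs = 1" using P1 by (intro exI[of _ "[s]"]) simp
    moreover have "\<forall>m. (\<exists>xs. isP xs \<and> length xs = m) \<longrightarrow> m \<le> card S" using bnd by blast
    ultimately show ?thesis
      using Nat.ex_has_greatest_nat[of "\<lambda>m. \<exists>xs. isP xs \<and> length xs = m" 1 "card S"] that by blast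
  qed
  then obtain xs where xs: "isP xs" "length xs = n" by blast
  have max: "length ys \<le> length xs" if "isP ys" for ys using n(2) xs(2) that by blast
  have n1: "1 \<le> n" using xs unfolding isP_def by (cases xs) auto
  have dist: "distinct xs" and sub: "set xs \<subseteq> S" and ad: "\<And>j. Suc j < n \<Longrightarrow> adj (xs!j) (xs!Suc j)"
    using xs unfolding isP_def by auto
  have inS: "i < n \<Longrightarrow> xs!i \<in> S" for i using sub xs(2) nth_mem by blast
  have eqi: "xs!i = xs!j \<longleftrightarrow> i = j" if "i < n" "j < n" for i j
    using dist that xs(2) nth_eq_iff_index_eq by blast
  define d where "d = n - 1"
  have nd: "n = Suc d" using n1 d_def by simp
  have endc: "y \<in> set xs" if "y \<in> S" "adj (xs!d) y" for y
  proof (rule ccontr)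
    assume yn: "y \<notin> set xs"
    have "isP (xs @ [y])" unfolding isP_def
    proof (intro conjI allI impI)
      fix j assume "Suc j < length (xs @ [y])"
      hence "j < n" using xs(2) by simp
      show "adj ((xs @ [y]) ! j) ((xs @ [y]) ! Suc j)"
      proof (cases "Suc j < n")
        case True thus ?thesis using ad[OF True] xs(2) by (simp add: nth_append)
      next
        case False
        hence "j = d" using \<open>j < n\<close> nd by simp
        thus ?thesis using that xs(2) nd by (simp add: nth_append)
      qed
    qed (use yn dist sub that in auto)
    thus False using max[of "xs @ [y]"] by simp
  qed
  have startc: "y \<in> set xs" if "y \<in> S" "adj (xs!0) y" for y
  proof (rule ccontr)
    assume yn: "y \<notin> set xs"
    have "isP (y # xs)" unfolding isP_def
    proof (intro conjI allI impI)
      fix j assume "Suc j < length (y # xs)"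
      show "adj ((y # xs) ! j) ((y # xs) ! Suc j)"
      proof (cases j)
        case 0 thus ?thesis using that sym by simp
      next
        case (Suc k) thus ?thesis using ad[of k] \<open>Suc j < length (y # xs)\<close> xs(2) by simp
      qed
    qed (use yn dist sub that in auto)
    thus False using max[of "y # xs"] by simp
  qed
  have interior: "y = xs!(i-1) \<or> y = xs!Suc i" if "0 < i" "i < d" "y \<in> S" "adj (xs!i) y" for i y
  proof -
    have a1: "adj (xs!i) (xs!(i-1))" using ad[of "i-1"] sym that nd by simp
    have a2: "adj (xs!i) (xs!Suc i)" using ad[of i] that nd by simp
    have "xs!(i-1) \<noteq> xs!Suc i" using eqi[of "i-1" "Suc i"] that nd by simp
    thus ?thesis using deg[OF inS inS inS \<open>y \<in> S\<close> a1 a2 that(4)] that nd by auto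
  qed
  have closed: "set xs = S"
  proof (rule conn[OF sub])
    show "set xs \<noteq> {}" using xs unfolding isP_def by simp
    show "\<forall>x\<in>set xs. \<forall>y\<in>S. adj x y \<longrightarrow> y \<in> set xs"
    proof (intro ballI impI)
      fix x y assume x: "x \<in> set xs" and y: "y \<in> S" and a: "adj x y"
      obtain i where i: "i < n" "x = xs!i" using x xs(2) by (metis in_set_conv_nth)
      show "y \<in> set xs"
      proof (cases "i = 0")
        case True thus ?thesis using startc y a i by simp
      next
        case False
        show ?thesis
        proof (cases "i = d")
          case True thus ?thesis using endc y a i by simp
        next
          case False
          hence "y = xs!(i-1) \<or> y = xs!Suc i" using interior[of i y] \<open>i \<noteq> 0\<close> i y a nd by simp
          moreover have "i - 1 < length xs" "Suc i < length xs" using i nd False xs(2) by auto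
          ultimately show ?thesis using nth_mem by metis
        qed
      qed
    qed
  qed
  have edge: "j = Suc i" if "i < j" "j \<le> d" "adj (xs!i) (xs!j)" for i j
  proof (rule ccontr)
    assume nj: "j \<noteq> Suc i"
    have i0: "i = 0"
    proof (rule ccontr)
      assume "i \<noteq> 0"
      hence "xs!j = xs!(i-1) \<or> xs!j = xs!Suc i"
        using interior[of i "xs!j"] that inS[of j] nd by simp
      moreover have "i - 1 < n" "Suc i < n" "j < n" using that nd by auto
      ultimately show False using eqi[of j "i-1"] eqi[of j "Suc i"] that nj by auto
    qed
    have jd: "j = d"
    proof (rule ccontr)
      assume "j \<noteq> d"
      hence "xs!i = xs!(j-1) \<or> xs!i = xs!Suc j"
        using interior[of j "xs!i"] that inS[of i] nd sym by simp
      moreover have "j - 1 < n" "Suc j < n" "i < n" using that nd \<open>j \<noteq> d\<close> by auto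
      ultimately show False using eqi[of i "j-1"] eqi[of i "Suc j"] that nj by auto
    qed
    have "2 \<le> d" using i0 jd nj that by simp
    moreover have "inj_on (\<lambda>k. xs!k) {0..d}"
      by (rule inj_onI) (use eqi nd in auto)
    moreover have "(\<lambda>k. xs!k) ` {0..d} \<subseteq> S" using inS nd by auto
    moreover have "\<forall>k<d. adj (xs!k) (xs!Suc k)" using ad nd by simp
    ultimately show False using nocyc[of d "\<lambda>k. xs!k"] that i0 jd by simp
  qed
  show ?thesis
  proof (intro exI conjI)
    show "inj_on (\<lambda>k. xs!k) {0..d}" by (rule inj_onI) (use eqi nd in auto)
    show "(\<lambda>k. xs!k) ` {0..d} = S"
    proof
      show "(\<lambda>k. xs!k) ` {0..d} \<subseteq> S" using inS nd by auto
      show "S \<subseteq> (\<lambda>k. xs!k) ` {0..d}"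
      proof
        fix y assume "y \<in> S"
        then obtain k where "k < length xs" "y = xs!k" using closed by (metis in_set_conv_nth)
        thus "y \<in> (\<lambda>k. xs!k) ` {0..d}" using xs(2) nd by auto
      qed
    qed
    show "\<forall>i\<le>d. \<forall>j\<le>d. adj (xs!i) (xs!j) \<longrightarrow> j = Suc i \<or> i = Suc j"
    proof (intro allI impI)
      fix i j assume "i \<le> d" "j \<le> d" "adj (xs!i) (xs!j)"
      thus "j = Suc i \<or> i = Suc j"
      proof -
        have "i \<noteq> j" using \<open>adj (xs!i) (xs!j)\<close> irr by metis
        hence "i < j \<or> j < i" by linarith
        thus ?thesis using edge[of i j] edge[of j i] sym \<open>i \<le> d\<close> \<open>j \<le> d\<close> \<open>adj (xs!i) (xs!j)\<close> by blast
      qed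
    qed
  qed
qed

lemma geom_zero:
  fixes f :: "nat \<Rightarrow> 'L::field"
  assumes "\<forall>k. f (Suc k) = a * f k" "f n = f 0" "a ^ n \<noteq> 1"
  shows "f 0 = 0"
proof -
  have fk: "f k = a ^ k * f 0" for k by (induction k) (use assms(1) in auto)
  have "(a ^ n - 1) * f 0 = 0" using assms(2) fk[of n] by (simp add: algebra_simps)
  thus ?thesis using assms(3) by simp
qed

lemma fe_props:
  assumes "field_embedding \<phi>"
  shows "\<phi> 0 = 0" "\<phi> (a - b) = \<phi> a - \<phi> b" "\<phi> (a + b) = \<phi> a + \<phi> b" "\<phi> (a * b) = \<phi> a * \<phi> b"
    "\<phi> a = \<phi> b \<Longrightarrow> a = b"
proof -
  have add: "\<And>a b. \<phi> (a + b) = \<phi> a + \<phi> b" and mul: "\<And>a b. \<phi> (a * b) = \<phi> a * \<phi> b"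
    and one: "\<phi> 1 = 1" using assms by (auto simp: field_embedding_def)
  have "\<phi> 0 + \<phi> 0 = \<phi> 0 + 0" using add[of 0 0] by simp
  thus z: "\<phi> 0 = 0" by (rule add_left_imp_eq)
  show d: "\<phi> (a - b) = \<phi> a - \<phi> b" using add[of "a - b" b] by (simp add: algebra_simps)
  show "\<phi> (a + b) = \<phi> a + \<phi> b" by (rule add)
  show "\<phi> (a * b) = \<phi> a * \<phi> b" by (rule mul)
  assume e: "\<phi> a = \<phi> b"
  show "a = b"
  proof (rule ccontr)
    assume "a \<noteq> b"
    hence "(a - b) * inverse (a - b) = 1" by simp
    hence "\<phi> (a - b) * \<phi> (inverse (a - b)) = 1" using mul one by metis
    thus False using d e by simp
  qed
qed

lemma no_cycle_alg:
  fixes u :: "nat \<Rightarrow> 'k::field" and \<phi> :: "'k \<Rightarrow> 'L::field"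
  assumes fe: "field_embedding \<phi>" and q0: "q \<noteq> 0" and qb: "q + inverse q = \<phi> \<beta>"
    and nr: "\<not> root_of_unity q"
    and per: "\<forall>k. u (k + n) = u k" and n0: "0 < n"
    and rec: "\<forall>k. u k + u (k + 2) = \<beta> * u (k + 1) + \<gamma>"
  shows "u 1 = u 0"
proof -
  define x where "x k = \<phi> (u k)" for k
  have xr: "x k + x (k + 2) = \<phi> \<beta> * x (k + 1) + \<phi> \<gamma>" for k
  proof -
    have "\<phi> (u k + u (k + 2)) = \<phi> (\<beta> * u (k + 1) + \<gamma>)" using rec by simp
    thus ?thesis unfolding x_def by (simp only: fe_props(3,4)[OF fe])
  qed
  have xp: "x (k + n) = x k" for k using per unfolding x_def by simp
  define e where "e k = x (Suc k) - x k" for k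
  have er: "e k + e (k + 2) = (q + inverse q) * e (k + 1)" for k
    using xr[of k] xr[of "Suc k"] unfolding e_def qb by (simp add: algebra_simps)
  have ep: "e (k + n) = e k" for k using xp[of k] xp[of "Suc k"] unfolding e_def by simp
  define y where "y k = e (Suc k) - q * e k" for k
  have yr: "y (Suc k) = inverse q * y k" for k
  proof -
    have "y (Suc k) = e (k + 2) - q * e (k + 1)" unfolding y_def by (simp add: numeral_2_eq_2)
    also have "\<dots> = inverse q * e (k + 1) - e k" using er[of k] by (simp add: algebra_simps)
    also have "\<dots> = inverse q * y k" unfolding y_def using q0 by (simp add: algebra_simps)
    finally show ?thesis .
  qed
  have qn: "q ^ n \<noteq> 1" using nr n0 unfolding root_of_unity_def by blast
  have qin: "inverse q ^ n \<noteq> 1" using qn by (simp add: power_inverse)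
  have yp: "y n = y 0" using ep[of 0] ep[of 1] unfolding y_def by simp
  have y00: "y 0 = 0" by (rule geom_zero[OF _ yp qin]) (use yr in blast)
  have yz: "y k = 0" for k by (induction k) (use y00 yr in auto)
  have "e (Suc k) = q * e k" for k using yz[of k] unfolding y_def by simp
  moreover have "e n = e 0" using ep[of 0] by simp
  ultimately have "e 0 = 0" using geom_zero[OF _ _ qn] by blast
  hence "\<phi> (u 1) = \<phi> (u 0)" unfolding e_def x_def by simp
  thus ?thesis using fe_props(5)[OF fe] by blast
qed

lemma Pf_sym: "Pf \<beta> \<gamma> \<rho> x y = Pf \<beta> \<gamma> \<rho> y x"
  by (simp add: Pf_def algebra_simps)

lemma vieta:
  assumes "Pf \<beta> \<gamma> \<rho> x a = 0" "Pf \<beta> \<gamma> \<rho> x b = 0" "a \<noteq> b"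
  shows "a + b = \<beta> * x + \<gamma>"
proof -
  have "(a - b) * (a + b - \<beta> * x - \<gamma>) = Pf \<beta> \<gamma> \<rho> x a - Pf \<beta> \<gamma> \<rho> x b"
    by (simp add: Pf_def algebra_simps)
  also have "\<dots> = 0" using assms by simp
  finally have "a + b - \<beta> * x - \<gamma> = 0" using assms(3) by simp
  thus ?thesis by (simp add: algebra_simps)
qed

lemma irr_sym: "irreducible_pair A B \<Longrightarrow> irreducible_pair B A"
  unfolding irreducible_pair_def by blast

lemma half:
  fixes A B :: "'k::field^'n^'n" and \<phi> :: "'k \<Rightarrow> 'L::field"
  assumes rel: "comm A (A ** A ** B - mscale \<beta> (A ** B ** A) + B ** A ** A
             - mscale \<gamma> (A ** B + B ** A) - mscale \<rho> B) = 0"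
    and irr: "irreducible_pair A B" and diag: "diagonalizable A"
    and fe: "field_embedding \<phi>" and q0: "q \<noteq> 0" and qb: "q + inverse q = \<phi> \<beta>"
    and nr: "\<not> root_of_unity q"
  shows "\<exists>d \<theta>. tridiagonal_ordering A B d \<theta>"
proof -
  define S where "S = eigvals A"
  have finS: "finite S" unfolding S_def by (rule eigvals_finite)
  have spanS: "vec.span (\<Union>\<theta>\<in>S. espace A \<theta>) = UNIV" using diag unfolding diagonalizable_def S_def .
  have nz: "\<exists>v. v \<in> espace A \<theta> \<and> v \<noteq> 0" if "\<theta> \<in> S" for \<theta>
    using that espace_zero unfolding S_def eigvals_def by blast
  have decS: "\<exists>w. (\<forall>\<theta>\<in>S. w \<theta> \<in> espace A \<theta>) \<and> x = (\<Sum>\<theta>\<in>S. w \<theta>)" for x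
    using decomp[OF finS, of x A] spanS by simp
  have neS: "S \<noteq> {}"
  proof
    assume "S = {}"
    hence "vec.span ({} :: ('k^'n) set) = UNIV" using spanS by simp
    hence "((\<chi> i. 1) :: 'k^'n) \<in> {0}" by (simp add: vec.span_empty)
    thus False by (simp add: vec_eq_iff)
  qed
  define adj where "adj x y \<longleftrightarrow> x \<noteq> y \<and> Pf \<beta> \<gamma> \<rho> x y = 0" for x y
  have sym: "adj x y \<Longrightarrow> adj y x" for x y unfolding adj_def using Pf_sym by metis
  have irrf: "\<not> adj x x" for x unfolding adj_def by simp
  have vi: "a + b = \<beta> * x + \<gamma>" if "adj x a" "adj x b" "a \<noteq> b" for x a b
    using vieta that unfolding adj_def by blast
  have deg: "a = b \<or> a = c \<or> b = c" if "adj x a" "adj x b" "adj x c" for x a b c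
  proof (rule ccontr)
    assume "\<not> (a = b \<or> a = c \<or> b = c)"
    hence "a \<noteq> b" "a \<noteq> c" "b \<noteq> c" by auto
    hence "a + b = a + c" using vi[OF that(1,2)] vi[OF that(1,3)] by simp
    thus False using \<open>b \<noteq> c\<close> by simp
  qed
  have conn: "C = S" if C: "C \<subseteq> S" "C \<noteq> {}" "\<forall>x\<in>C. \<forall>y\<in>S. adj x y \<longrightarrow> y \<in> C" for C
  proof (rule ccontr)
    assume CS: "C \<noteq> S"
    have finC: "finite C" using C(1) finS finite_subset by blast
    define W where "W = vec.span (\<Union>\<theta>\<in>C. espace A \<theta>)"
    have gen: "x \<in> W" if "\<theta> \<in> C" "x \<in> espace A \<theta>" for x \<theta>
      unfolding W_def using that by (intro vec.span_base) blast
    have AW: "A *v x \<in> W" if "x \<in> W" for x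
      using that[unfolded W_def]
    proof (induction rule: vec.span_induct_alt)
      case base thus ?case by (simp add: W_def vec.span_zero)
    next
      case (step c x y)
      then obtain \<theta> where t: "\<theta> \<in> C" "x \<in> espace A \<theta>" by blast
      have "A *v x = \<theta> *s x" using t by (simp add: espace_def)
      moreover have "\<theta> *s x \<in> espace A \<theta>" using t espace_scale by blast
      ultimately have "A *v x \<in> W" using t gen by metis
      thus ?case using step(2) unfolding W_def
        by (simp add: matrix_vector_right_distrib vec.scale vec.span_add vec.span_scale)
    qed
    have BW: "B *v x \<in> W" if "x \<in> W" for x
      using that[unfolded W_def]
    proof (induction rule: vec.span_induct_alt)
      case base thus ?case by (simp add: W_def vec.span_zero)
    next
      case (step c x y)
      then obtain \<theta> where t: "\<theta> \<in> C" "x \<in> espace A \<theta>" by blast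
      obtain w where w: "\<forall>x\<in>S. w x \<in> espace A x" "B *v x = (\<Sum>x\<in>S. w x)" using decS by blast
      have w0: "w \<theta>' = 0" if "\<theta>' \<in> S - C" for \<theta>'
      proof -
        have ne: "\<theta>' \<noteq> \<theta>" using that t by blast
        have "\<not> adj \<theta> \<theta>'" using C(3) t that by blast
        hence "Pf \<beta> \<gamma> \<rho> \<theta> \<theta>' \<noteq> 0" using ne unfolding adj_def by auto
        thus ?thesis using key[OF rel finS t(2) w(1) w(2)] ne that by blast
      qed
      have "B *v x = (\<Sum>x\<in>C. w x)"
        using w(2) sum.mono_neutral_right[OF finS C(1), of w] w0 by simp
      also have "\<dots> \<in> W" using w(1) C(1) gen by (auto intro!: vec.span_sum simp: W_def)
      finally have "B *v x \<in> W" .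
      thus ?case using step(2) unfolding W_def
        by (simp add: matrix_vector_right_distrib vec.scale vec.span_add vec.span_scale)
    qed
    have "W = {0} \<or> W = UNIV"
      using irr unfolding irreducible_pair_def W_def
      using AW BW unfolding W_def by blast
    moreover have "W \<noteq> {0}"
    proof -
      obtain \<theta> where "\<theta> \<in> C" using C(2) by blast
      then obtain v where "v \<in> espace A \<theta>" "v \<noteq> 0" using nz C(1) by blast
      thus ?thesis using gen \<open>\<theta> \<in> C\<close> by blast
    qed
    moreover have "W \<noteq> UNIV"
    proof
      assume WU: "W = UNIV"
      obtain \<theta> where th: "\<theta> \<in> S" "\<theta> \<notin> C" using CS C(1) by blast
      then obtain v where v: "v \<in> espace A \<theta>" "v \<noteq> 0" using nz by blast
      have "v \<in> W" using WU by simp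
      then obtain w where w: "\<forall>x\<in>C. w x \<in> espace A x" "v = (\<Sum>x\<in>C. w x)"
        using decomp[OF finC] unfolding W_def by blast
      define w' where "w' x = (if x = \<theta> then - v else w x)" for x
      have "(\<Sum>x\<in>insert \<theta> C. w' x) = - v + (\<Sum>x\<in>C. w x)"
      proof -
        have "(\<Sum>x\<in>C. w' x) = (\<Sum>x\<in>C. w x)"
          by (rule sum.cong) (use th(2) in \<open>auto simp: w'_def\<close>)
        thus ?thesis using finC th(2) by (simp add: w'_def)
      qed
      hence "(\<Sum>x\<in>insert \<theta> C. w' x) = 0" using w(2) by simp
      moreover have "\<forall>x\<in>insert \<theta> C. w' x \<in> espace A x"
        using w(1) v(1) th(2) espace_scale[of v A \<theta> "-1"] by (auto simp: w'_def)
      ultimately have "w' \<theta> = 0" using indep[of "insert \<theta> C" w' A] finC by blast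
      thus False using v(2) by (simp add: w'_def)
    qed
    ultimately show False by blast
  qed
  have nocyc: False if c: "2 \<le> d" "inj_on \<theta> {0..d}" "\<theta> ` {0..d} \<subseteq> S"
     "\<forall>j<d. adj (\<theta> j) (\<theta> (Suc j))" "adj (\<theta> 0) (\<theta> d)" for d \<theta>
  proof -
    define n where "n = Suc d"
    define u where "u k = \<theta> (k mod n)" for k
    have n3: "3 \<le> n" using c(1) n_def by simp
    have step: "adj (u k) (u (Suc k))" for k
    proof (cases "Suc (k mod n) = n")
      case True
      hence "k mod n = d" "Suc k mod n = 0" using n_def by (auto simp: mod_Suc)
      thus ?thesis using c(5) sym u_def by simp
    next
      case False
      hence e: "Suc k mod n = Suc (k mod n)" by (simp add: mod_Suc)
      have "k mod n < n" using n_def by simp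
      hence "k mod n < d" using False n_def by linarith
      thus ?thesis using c(4) e u_def by simp
    qed
    have dist2: "u k \<noteq> u (k + 2)" for k
    proof
      assume "u k = u (k + 2)"
      moreover have "k mod n \<in> {0..d}" "(k + 2) mod n \<in> {0..d}" using n_def
        by (simp_all add: less_Suc_eq_le)
      ultimately have "k mod n = (k + 2) mod n" using c(2) unfolding u_def by (auto dest: inj_onD)
      hence "n dvd 2" using mod_eq_dvd_iff_nat[of k "k + 2" n] by simp
      hence "n \<le> 2" by (rule dvd_imp_le) simp
      thus False using n3 by simp
    qed
    have rec: "\<forall>k. u k + u (k + 2) = \<beta> * u (k + 1) + \<gamma>"
    proof
      fix k
      show "u k + u (k + 2) = \<beta> * u (k + 1) + \<gamma>"
        using vi[OF sym[OF step[of k]] step[of "Suc k"]] dist2[of k] by (simp add: numeral_2_eq_2)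
    qed
    have per: "\<forall>k. u (k + n) = u k" by (simp add: u_def)
    have "u 1 = u 0" by (rule no_cycle_alg[OF fe q0 qb nr per _ rec]) (simp add: n_def)
    moreover have "u 1 = \<theta> 1" "u 0 = \<theta> 0" using n3 by (simp_all add: u_def)
    moreover have "\<theta> 1 \<noteq> \<theta> 0" using c(1,2) by (auto dest: inj_onD)
    ultimately show False by simp
  qed
  obtain d \<theta> where p: "inj_on \<theta> {0..d}" "\<theta> ` {0..d} = S"
      "\<forall>i\<le>d. \<forall>j\<le>d. adj (\<theta> i) (\<theta> j) \<longrightarrow> j = Suc i \<or> i = Suc j"
  proof -
    have "\<exists>d \<theta>. inj_on \<theta> {0..d} \<and> \<theta> ` {0..d} = S \<and>
            (\<forall>i\<le>d. \<forall>j\<le>d. adj (\<theta> i) (\<theta> j) \<longrightarrow> j = Suc i \<or> i = Suc j)"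
      apply (rule path_exists[OF finS neS, of adj])
          apply (erule sym)
         apply (rule irrf)
        apply (rule deg; assumption)
       apply (rule conn; assumption)
      apply (rule nocyc; assumption)
      done
    thus ?thesis using that by blast
  qed
  have "tridiagonal_ordering A B d \<theta>"
    unfolding tridiagonal_ordering_def
  proof (intro conjI allI impI)
    show "inj_on \<theta> {0..d}" by (rule p(1))
    show "\<theta> ` {0..d} = eigvals A" using p(2) S_def by simp
    fix i assume id: "i \<le> d"
    show "(\<lambda>v. B *v v) ` espace A (\<theta> i) \<subseteq>
        ssum3 (if 0 < i then espace A (\<theta> (i - 1)) else {0}) (espace A (\<theta> i))
              (if i < d then espace A (\<theta> (i + 1)) else {0})"
    proof
      fix z assume "z \<in> (\<lambda>v. B *v v) ` espace A (\<theta> i)"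
      then obtain v where v: "v \<in> espace A (\<theta> i)" "z = B *v v" by blast
      obtain w where w: "\<forall>x\<in>S. w x \<in> espace A x" "B *v v = (\<Sum>x\<in>S. w x)" using decS by blast
      define g where "g j = w (\<theta> j)" for j
      have g0: "g j = 0" if "j \<le> d" "j \<noteq> i" "Suc j \<noteq> i" "j \<noteq> Suc i" for j
      proof -
        have ne: "\<theta> j \<noteq> \<theta> i" using p(1) that id by (auto dest: inj_onD)
        have "\<not> adj (\<theta> i) (\<theta> j)" using p(3) that id by blast
        hence "Pf \<beta> \<gamma> \<rho> (\<theta> i) (\<theta> j) \<noteq> 0" using ne unfolding adj_def by auto
        moreover have "\<theta> j \<in> S" using p(2) that by auto
        ultimately show ?thesis unfolding g_def using key[OF rel finS v(1) w(1) w(2)] ne by blast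
      qed
      have sumg: "B *v v = (\<Sum>j\<in>{0..d}. g j)"
        using w(2) p(1) p(2)[symmetric] by (simp add: sum.reindex g_def)
      have pw: "g j = (if 0 < i \<and> j = i - 1 then g (i - 1) else 0) + (if j = i then g i else 0)
                  + (if i < d \<and> j = Suc i then g (Suc i) else 0)" if "j \<in> {0..d}" for j
        using g0[of j] that by auto
      have "(\<Sum>j\<in>{0..d}. g j) = (if 0 < i then g (i - 1) else 0) + g i + (if i < d then g (Suc i) else 0)"
      proof -
        have s1: "(\<Sum>j\<in>{0..d}. if 0 < i \<and> j = i - 1 then g (i - 1) else 0) = (if 0 < i then g (i - 1) else 0)"
          using id by (cases "0 < i") auto
        have s2: "(\<Sum>j\<in>{0..d}. if j = i then g i else 0) = g i"
          using id by simp
        have s3: "(\<Sum>j\<in>{0..d}. if i < d \<and> j = Suc i then g (Suc i) else 0) = (if i < d then g (Suc i) else 0)"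
          using id by (cases "i < d") auto
        have "(\<Sum>j\<in>{0..d}. g j) = (\<Sum>j\<in>{0..d}. (if 0 < i \<and> j = i - 1 then g (i - 1) else 0) + (if j = i then g i else 0)
                  + (if i < d \<and> j = Suc i then g (Suc i) else 0))"
          by (intro sum.cong refl pw)
        also have "\<dots> = (if 0 < i then g (i - 1) else 0) + g i + (if i < d then g (Suc i) else 0)"
          by (simp only: sum.distrib s1 s2 s3)
        finally show ?thesis .
      qed
      note sumeq = this
      have m1: "(if 0 < i then g (i - 1) else 0) \<in> (if 0 < i then espace A (\<theta> (i - 1)) else {0})"
        using w(1) p(2) id unfolding g_def by auto
      have m2: "g i \<in> espace A (\<theta> i)" using w(1) p(2) id unfolding g_def by auto
      have m3: "(if i < d then g (Suc i) else 0) \<in> (if i < d then espace A (\<theta> (i + 1)) else {0})"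
        using w(1) p(2) id unfolding g_def by auto
      show "z \<in> ssum3 (if 0 < i then espace A (\<theta> (i - 1)) else {0}) (espace A (\<theta> i))
              (if i < d then espace A (\<theta> (i + 1)) else {0})"
        unfolding ssum3_def
        by (rule CollectI, rule exI[of _ "if 0 < i then g (i - 1) else 0"], rule exI[of _ "g i"],
            rule exI[of _ "if i < d then g (Suc i) else 0"]) (use m1 m2 m3 sumeq sumg v(2) in simp)
    qed
  qed
  thus ?thesis by blast
qed

theorem theorem3p9:
  fixes \<beta> \<gamma> \<gamma>s \<rho> \<rho>s :: "'k::field"
    and \<phi> :: "'k \<Rightarrow> 'L::field" and q :: 'L
    and A As :: "'k^'n^'n"
  assumes "field_embedding \<phi>"
    and "q \<noteq> 0" and "q + inverse q = \<phi> \<beta>"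
    and "\<not> root_of_unity q"
    and "TD_relations \<beta> \<gamma> \<gamma>s \<rho> \<rho>s A As"
    and "irreducible_pair A As"
    and "diagonalizable A" and "diagonalizable As"
  shows "TD_pair A As"
proof -
  have r1: "comm A (A ** A ** As - mscale \<beta> (A ** As ** A) + As ** A ** A
             - mscale \<gamma> (A ** As + As ** A) - mscale \<rho> As) = 0"
   and r2: "comm As (As ** As ** A - mscale \<beta> (As ** A ** As) + A ** As ** As
             - mscale \<gamma>s (As ** A + A ** As) - mscale \<rho>s A) = 0"
    using assms(5) unfolding TD_relations_def by auto
  have "\<exists>d \<theta>. tridiagonal_ordering A As d \<theta>"
    by (rule half[OF r1 assms(6) assms(7) assms(1) assms(2) assms(3) assms(4)])
  moreover have "\<exists>d \<theta>. tridiagonal_ordering As A d \<theta>"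
    by (rule half[OF r2 irr_sym[OF assms(6)] assms(8) assms(1) assms(2) assms(3) assms(4)])
  ultimately show ?thesis unfolding TD_pair_def using assms(6,7,8) by blast
qed

end
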